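(* Let $G_0,G_1\in\mathbb{Z}$ with $\gcd(G_0,G_1)=1$, let $(G_n)_{n\ge0}$ satisfy $G_n=G_{n-1}+G_{n-2}$ for $n\ge2$, and let $\mu = G_1^2 - G_0 G_1 - G_0^2$. For every even integer $k \geq 1$ (i.e. $k\ge 2$ even), $$\mathcal{G}^2_{G_0,G_1}(k) = \begin{cases} F_k, & \text{if $5$ does not divide $\mu$},\\ 5 F_k, & \text{if $5$ divides $\mu$},\end{cases}$$ where $F_k$ is the $k$-th Fibonacci number.
   Context: $\mathcal{G}^2_{G_0,G_1}(k)=\gcd\{\sum_{i=1}^k G_{n+i}^2 : n\ge 0\}$ (nonnegative gcd of this infinite set). $F_0=0$, $F_1=1$, $F_n=F_{n-1}+F_{n-2}$. *)

theory Defs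
  imports "HOL-Number_Theory.Fib"
begin

text \<open>The gcd of the infinite set of sums of k consecutive squares
  G_{n+1}^2 + ... + G_{n+k}^2, n \<ge> 0. Gcd on int is nonnegative (normalized).\<close>
definition sqsum_gcd :: "(nat \<Rightarrow> int) \<Rightarrow> nat \<Rightarrow> int" where
  "sqsum_gcd G k = Gcd {(\<Sum>i=1..k. (G (n+i))^2) | n. True}"

end

theory Submission
  imports Defs
begin

lemma lin_form:
  fixes G :: "nat \<Rightarrow> int"
  assumes r2: "\<And>n. G (n+2) = G (n+1) + G n"
  shows "G (m+r+1) = int (fib r) * G m + int (fib (r+1)) * G (m+1)"
proof (induction r rule: fib.induct)
  case 1 then show ?case by simp
next
  case 2 then show ?case using r2[of m] by (simp add: algebra_simps)
next
  case (3 n)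
  have "G (m + Suc (Suc n) + 1) = G (m+n+1+2)" by simp
  also have "\<dots> = G (m+n+1+1) + G (m+n+1)" by (rule r2)
  also have "\<dots> = G (m + Suc n + 1) + G (m+n+1)" by simp
  finally show ?case using 3 by (simp add: algebra_simps)
qed

lemma telescope:
  fixes G :: "nat \<Rightarrow> int"
  assumes r2: "\<And>n. G (n+2) = G (n+1) + G n"
  shows "(\<Sum>i=1..k. (G (n+i))^2) = G (n+k) * G (n+k+1) - G n * G (n+1)"
proof (induction k)
  case 0 then show ?case by simp
next
  case (Suc k)
  have "G (n + Suc k + 1) = G (n+k+1) + G (n+k)" using r2[of "n+k"] by simp
  then show ?case using Suc by (simp add: power2_eq_square algebra_simps)
qed

lemma cass: "(int (fib (t+1))^2 - int (fib t) * int (fib (t+1)) - int (fib t)^2)^2 = 1"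
proof -
  have "int (fib (Suc (Suc t)) * fib t) - int((fib (Suc t))\<^sup>2) = - ((-1)^t)"
    by (rule fib_Cassini_int)
  moreover have "fib (Suc (Suc t)) = fib (t+1) + fib t" by simp
  ultimately have "int (fib (t+1))^2 - int (fib t) * int (fib (t+1)) - int (fib t)^2 = (-1)^t"
    by (simp add: algebra_simps power2_eq_square)
  then show ?thesis by (simp add: power_mult[symmetric] mult.commute)
qed

lemma key_id:
  fixes G :: "nat \<Rightarrow> int"
  assumes r2: "\<And>n. G (n+2) = G (n+1) + G n"
  shows "(\<Sum>i=1..2*t+2. (G (n+i))^2) = int (fib (2*t+2)) * ((G (n+t+1))^2 + (G (n+t+2))^2)"
proof -
  define x where "x = G n"
  define y where "y = G (n+1)"
  define c where "c = int (fib t)"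
  define d where "d = int (fib (t+1))"
  have fa: "int (fib (2*t+1)) = c^2 + d^2"
    using fib_add[of t t] by (simp add: c_def d_def power2_eq_square mult_2)
  have fb: "int (fib (2*t+2)) = d*(2*c+d)"
  proof -
    have e: "Suc (t + Suc t) = 2*t+2" by simp
    have h: "fib (2*t+2) = fib (Suc (Suc t)) * fib (Suc t) + fib (Suc t) * fib t"
      using fib_add[of t "Suc t"] unfolding e .
    have h2: "fib (2*t+2) = fib (t+1) * (2*fib t + fib (t+1))"
      using h by (simp add: algebra_simps)
    have "int (fib (2*t+2)) = int (fib (t+1) * (2*fib t + fib (t+1)))" by (simp only: h2)
    then show ?thesis by (simp add: c_def d_def algebra_simps)
  qed
  have g1: "G (n+(2*t+2)) = int (fib (2*t+1)) * x + int (fib (2*t+2)) * y"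
    using lin_form[OF r2, of n "2*t+1"] by (simp add: x_def y_def)
  have g2: "G (n+(2*t+2)+1) = int (fib (2*t+2)) * x + (int (fib (2*t+1)) + int (fib (2*t+2))) * y"
    using lin_form[OF r2, of n "2*t+2"] by (simp add: x_def y_def)
  have g3: "G (n+t+1) = c * x + d * y"
    using lin_form[OF r2, of n t] by (simp add: x_def y_def c_def d_def)
  have g4: "G (n+t+2) = d * x + (c+d) * y"
    using lin_form[OF r2, of n "t+1"] by (simp add: x_def y_def c_def d_def add.commute)
  have cs: "(d^2 - c*d - c^2)^2 = 1" using cass[of t] by (simp add: c_def d_def)
  have "(\<Sum>i=1..2*t+2. (G (n+i))^2) = G (n+(2*t+2)) * G (n+(2*t+2)+1) - x * y"
    using telescope[OF r2, of n "2*t+2"] by (simp add: x_def y_def)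
  also have "\<dots> = ((c^2+d^2)*x + d*(2*c+d)*y) * (d*(2*c+d)*x + ((c^2+d^2) + d*(2*c+d))*y) - x*y"
    by (simp only: g1 g2 fa fb)
  also have "\<dots> = d*(2*c+d) * ((c*x+d*y)^2 + (d*x+(c+d)*y)^2) + x*y*((d^2 - c*d - c^2)^2 - 1)"
    by (simp add: algebra_simps power2_eq_square)
  also have "\<dots> = int (fib (2*t+2)) * ((G (n+t+1))^2 + (G (n+t+2))^2)"
    using cs g3 g4 fb by simp
  finally show ?thesis .
qed

lemma res5:
  fixes x y :: int
  shows "(5 dvd (x^2+y^2) \<and> 5 dvd (y^2+(x+y)^2)) = (5 dvd (y^2 - x*y - x^2))"
proof -
  define r where "r = x mod 5"
  define u where "u = y mod 5"
  define q where "q = x div 5"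
  define s where "s = y div 5"
  have xq: "x = 5*q + r" unfolding q_def r_def by simp
  have ys: "y = 5*s + u" unfolding s_def u_def by simp
  have e1: "x^2+y^2 = (r^2+u^2) + 5*(5*q^2+2*q*r+5*s^2+2*s*u)" unfolding xq ys by algebra
  have e2: "y^2+(x+y)^2 = (u^2+(r+u)^2) + 5*(5*s^2+2*s*u + 5*(q+s)^2 + 2*(q+s)*(r+u))" unfolding xq ys by algebra
  have e3: "y^2 - x*y - x^2 = (u^2 - r*u - r^2) + 5*(5*s^2+2*s*u - 5*q*s - q*u - r*s - 5*q^2 - 2*q*r)" unfolding xq ys by algebra
  have r: "r \<in> {0..4}" unfolding r_def by auto
  have u: "u \<in> {0..4}" unfolding u_def by auto
  have "(5 dvd (r^2+u^2) \<and> 5 dvd (u^2+(r+u)^2)) = (5 dvd (u^2 - r*u - r^2))"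
  proof -
    have "r \<in> {0,1,2,3,4}" "u \<in> {0,1,2,3,4}" using r u by auto
    then show ?thesis by auto
  qed
  then show ?thesis unfolding e1 e2 e3 by (simp add: dvd_add_left_iff)
qed

lemma base5:
  fixes x y :: int
  assumes cop: "coprime x y"
  shows "gcd (x^2+y^2) (y^2+(x+y)^2) = (if 5 dvd (y^2 - x*y - x^2) then 5 else 1)"
proof -
  define A where "A = x^2+y^2"
  define B where "B = y^2+(x+y)^2"
  define d where "d = gcd A B"
  have dA: "d dvd A" and dB: "d dvd B" unfolding d_def by auto
  have cy: "coprime d y"
  proof (rule coprimeI)
    fix c assume c1: "c dvd d" and c2: "c dvd y"
    have "c dvd A" using c1 dA by (rule dvd_trans)
    moreover have "c dvd y*y" using c2 by simp
    ultimately have "c dvd A - y*y" by (rule dvd_diff)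
    then have "c dvd x^2" by (simp add: A_def power2_eq_square)
    moreover have "coprime (x^2) y" using cop by simp
    ultimately show "is_unit c" using c2 coprime_common_divisor by blast
  qed
  have cx: "coprime d x"
  proof (rule coprimeI)
    fix c assume c1: "c dvd d" and c2: "c dvd x"
    have "c dvd A" using c1 dA by (rule dvd_trans)
    moreover have "c dvd x*x" using c2 by simp
    ultimately have "c dvd A - x*x" by (rule dvd_diff)
    then have "c dvd y^2" by (simp add: A_def power2_eq_square)
    moreover have "coprime x (y^2)" using cop by simp
    ultimately show "is_unit c" using c2 coprime_common_divisor by blast
  qed
  have "d dvd B - A" using dB dA by (rule dvd_diff)
  moreover have "B - A = y*(2*x+y)" unfolding A_def B_def by algebra
  ultimately have "d dvd y*(2*x+y)" by simp
  then have d2: "d dvd 2*x+y" using cy coprime_dvd_mult_right_iff by blast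
  have "d dvd (2*x+y)*(2*x-y) + A" using d2 dA by simp
  moreover have "(2*x+y)*(2*x-y) + A = 5 * x^2" unfolding A_def by algebra
  ultimately have "d dvd 5 * x^2" by simp
  moreover have "coprime d (x^2)" using cx by simp
  ultimately have d5: "d dvd 5" using coprime_dvd_mult_left_iff by blast
  have dpos: "d \<ge> 0" unfolding d_def by simp
  have dne: "d \<noteq> 0" using d5 by auto
  have "d \<le> 5" using d5 by (simp add: zdvd_imp_le)
  then have "d = 1 \<or> d = 2 \<or> d = 3 \<or> d = 4 \<or> d = 5" using dpos dne by presburger
  with d5 have d15: "d = 1 \<or> d = 5" by auto
  have iff: "(d = 5) = (5 dvd A \<and> 5 dvd B)"
  proof
    assume "d = 5" then show "5 dvd A \<and> 5 dvd B" using dA dB by simp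
  next
    assume "5 dvd A \<and> 5 dvd B"
    then have "5 dvd d" unfolding d_def by simp
    then show "d = 5" using d15 by auto
  qed
  show ?thesis using iff d15 res5[of x y] unfolding d_def A_def B_def by auto
qed

lemma U_gcd:
  fixes G :: "nat \<Rightarrow> int"
  assumes r2: "\<And>n. G (n+2) = G (n+1) + G n"
  shows "gcd ((G m)^2 + (G (m+1))^2) ((G (m+1))^2 + (G (m+2))^2)
       = gcd ((G 0)^2 + (G 1)^2) ((G 1)^2 + (G 2)^2)"
proof (induction m)
  case 0 then show ?case by (simp add: numeral_2_eq_2)
next
  case (Suc m)
  define x where "x = G m"
  define y where "y = G (m+1)"
  have a: "G (m+2) = x + y" using r2[of m] by (simp add: x_def y_def)
  have b: "G (m+3) = x + 2*y" using r2[of "m+1"] a by (simp add: y_def add.commute numeral_3_eq_3)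
  have "gcd (y^2 + (x+y)^2) ((x+y)^2 + (x+2*y)^2)
      = gcd (y^2 + (x+y)^2) (3 * (y^2 + (x+y)^2) + (- (x^2+y^2)))"
    by (simp add: algebra_simps power2_eq_square)
  also have "\<dots> = gcd (y^2 + (x+y)^2) (x^2+y^2)" by (simp only: gcd_add_mult gcd_neg2)
  also have "\<dots> = gcd (x^2+y^2) (y^2 + (x+y)^2)" by (rule gcd.commute)
  finally have "gcd (y^2 + (x+y)^2) ((x+y)^2 + (x+2*y)^2) = gcd (x^2+y^2) (y^2 + (x+y)^2)" .
  then show ?case using Suc a b
    by (simp add: x_def y_def numeral_3_eq_3 add.commute[of _ 2] add.commute[of _ 1])
qed

lemma U_dvd:
  fixes G :: "nat \<Rightarrow> int"
  assumes r2: "\<And>n. G (n+2) = G (n+1) + G n"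
  shows "gcd ((G 0)^2 + (G 1)^2) ((G 1)^2 + (G 2)^2) dvd (G m)^2 + (G (m+1))^2"
proof -
  have "gcd ((G m)^2 + (G (m+1))^2) ((G (m+1))^2 + (G (m+2))^2) dvd (G m)^2 + (G (m+1))^2"
    by simp
  then show ?thesis using U_gcd[OF r2, of m] by metis
qed

theorem theorem4p7:
  fixes G :: "nat \<Rightarrow> int" and k :: nat
  assumes cop: "gcd (G 0) (G 1) = 1"
    and rec: "\<And>n. n \<ge> 2 \<Longrightarrow> G n = G (n - 1) + G (n - 2)"
    and keven: "even k" and kpos: "k \<ge> 1"
  shows "sqsum_gcd G k =
    (if (5::int) dvd ((G 1)^2 - G 0 * G 1 - (G 0)^2) then 5 * int (fib k) else int (fib k))"
proof -
  have r2: "\<And>n. G (n+2) = G (n+1) + G n" using rec by fastforce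
  obtain j where kj: "k = 2*j" using keven by blast
  define t where "t = j - 1"
  have kt: "k = 2*t+2" using kj kpos unfolding t_def by simp
  define U where "U m = (G m)^2 + (G (m+1))^2" for m
  define g where "g = gcd (U 0) (U 1)"
  define F where "F = int (fib k)"
  have Fpos: "F \<ge> 0" unfolding F_def by simp
  have gpos: "g \<ge> 0" unfolding g_def by simp
  have S: "(\<Sum>i=1..k. (G (n+i))^2) = F * U (n+t+1)" for n
    using key_id[OF r2, where t=t and n=n] unfolding kt F_def U_def by (simp add: add.assoc)
  have gU: "g dvd U m" for m using U_dvd[OF r2, of m] unfolding g_def U_def by (simp add: numeral_2_eq_2)
  have gg: "gcd (U m) (U (m+1)) = g" for m
    using U_gcd[OF r2, of m] unfolding g_def U_def by (simp add: add.assoc numeral_2_eq_2)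
  have set_eq: "{(\<Sum>i=1..k. (G (n+i))^2) | n. True} = {F * U (n+t+1) | n. True}"
    using S by simp
  define D where "D = Gcd {F * U (n+t+1) | n. True}"
  have D1: "D dvd F * U (t+1)" unfolding D_def by (rule Gcd_dvd, rule CollectI, rule exI[where x=0]) simp
  have D2: "D dvd F * U (t+2)" unfolding D_def by (rule Gcd_dvd, rule CollectI, rule exI[where x=1]) simp
  have "D dvd gcd (F * U (t+1)) (F * U (t+2))" using D1 D2 by simp
  also have "gcd (F * U (t+1)) (F * U (t+2)) = F * g"
    using gg[of "t+1"] Fpos gpos by (simp add: gcd_mult_left)
  finally have Da: "D dvd F * g" .
  have Db: "F * g dvd D" unfolding D_def
    by (rule Gcd_greatest) (auto intro: mult_dvd_mono gU)
  have DFg: "D = F * g"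
    by (rule zdvd_antisym_nonneg) (use Da Db Fpos in \<open>auto simp: D_def g_def\<close>)
  have gv: "g = (if 5 dvd ((G 1)^2 - G 0 * G 1 - (G 0)^2) then 5 else 1)"
  proof -
    have c: "coprime (G 0) (G 1)" using cop by (simp add: coprime_iff_gcd_eq_1)
    have "U 1 = (G 1)^2 + (G 0 + G 1)^2" unfolding U_def using r2[of 0] by (simp add: add.commute)
    then show ?thesis using base5[OF c] unfolding g_def U_def by simp
  qed
  have "sqsum_gcd G k = D" unfolding sqsum_gcd_def set_eq D_def by (rule refl)
  then show ?thesis unfolding DFg gv F_def by simp
qed

end
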